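(* Let $R\ge1$, $\Gamma\ge1$, $1\le s_1\le n_1$, $1\le s_2\le n_2$, and assume $s_1/n_1\le s_2/n_2$. Then for $0<\varepsilon<6\Gamma\sqrt R$, $\log N(K^{R,\Gamma}_{s_1,s_2},\|\cdot\|_F,\varepsilon)$ is at most $$\begin{cases}R(n_1+n_2+1)\log\!\big(\frac{36\Gamma R}{\varepsilon}\big), & 0<\varepsilon<12\Gamma\sqrt{\frac{Rs_1}{n_1}},\\[4pt] \frac{144\Gamma^2R^2s_1}{\varepsilon^2}\log\!\big(\frac{9\varepsilon n_1}{6\Gamma\sqrt Rs_1}\big)+R(n_2+1)\log\!\big(\frac{36\Gamma R}{\varepsilon}\big), & 12\Gamma\sqrt{\frac{Rs_1}{n_1}}\le\varepsilon<12\Gamma\sqrt{\frac{Rs_2}{n_2}},\\[4pt] \frac{144\Gamma^2R^2(s_1+s_2)}{\varepsilon^2}\log\!\big(\frac{9\varepsilon n_1}{6\Gamma\sqrt Rs_1}\big)+R\log\!\big(\frac{18\Gamma R}{\varepsilon}\big), & 12\Gamma\sqrt{\frac{Rs_2}{n_2}}\le\varepsilon<6\Gamma\sqrt R.\end{cases}$$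
   Context: $N(M,\|\cdot\|,\varepsilon)$ is the minimal number of $\|\cdot\|$-balls of radius $\varepsilon$ needed to cover $M$. For $n\ge1,s>0$: $K_{n,s}=\{z\in\mathbb{R}^n:\|z\|_2\le1,\|z\|_1\le\sqrt s\}$. $K^{R,\Gamma}_{s_1,s_2}$ is the set of $Z\in\mathbb{R}^{n_1\times n_2}$ of the form $Z=\sum_{r=1}^R\sigma_ru^r(v^r)^T$ with $u^r\in K_{n_1,s_1}$, $v^r\in K_{n_2,s_2}$, $\|u^r\|_2=\|v^r\|_2=1$ for all $r$, and $\sigma\in\mathbb{R}^R$, $\|\sigma\|_2\le\Gamma$. *)

theory Defs
  imports "HOL-Analysis.Analysis"
begin

definition covering_number :: "'a::metric_space set \<Rightarrow> real \<Rightarrow> nat" where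
  "covering_number M eps = Inf {card C | C. finite C \<and> M \<subseteq> (\<Union>c\<in>C. cball c eps)}"

definition l1norm :: "real ^ 'n \<Rightarrow> real" where
  "l1norm z = (\<Sum>i\<in>UNIV. \<bar>z $ i\<bar>)"

definition Kns :: "real \<Rightarrow> (real ^ 'n) set" where
  "Kns s = {z. norm z \<le> 1 \<and> l1norm z \<le> sqrt s}"

definition outer :: "real ^ 'm \<Rightarrow> real ^ 'n \<Rightarrow> real ^ 'n ^ 'm" where
  "outer u v = (\<chi> i j. u $ i * v $ j)"

text \<open>K^{R,Gamma}_{s1,s2}.  The norm on real^'n^'m is the Frobenius norm.\<close>
definition KRG :: "nat \<Rightarrow> real \<Rightarrow> real \<Rightarrow> real \<Rightarrow> (real ^ 'n ^ 'm) set" where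
  "KRG R \<Gamma> s1 s2 = {Z. \<exists>\<sigma> (u :: nat \<Rightarrow> real ^ 'm) (v :: nat \<Rightarrow> real ^ 'n).
      Z = (\<Sum>r<R. \<sigma> r *\<^sub>R outer (u r) (v r)) \<and>
      (\<forall>r<R. u r \<in> Kns s1 \<and> v r \<in> Kns s2 \<and> norm (u r) = 1 \<and> norm (v r) = 1) \<and>
      sqrt (\<Sum>r<R. (\<sigma> r)\<^sup>2) \<le> \<Gamma>}"

end

theory Submission
  imports Defs
begin

lemma packing_card:
  fixes P :: "'a::euclidean_space set"
  assumes fin: "finite P" and sub: "P \<subseteq> cball 0 1" and sep: "\<forall>p\<in>P. \<forall>q\<in>P. p \<noteq> q \<longrightarrow> dist p q > \<delta>"
    and d: "\<delta> > 0"
  shows "real (card P) \<le> ((2+\<delta>)/\<delta>) ^ DIM('a)"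
proof -
  let ?V = "unit_ball_vol (DIM('a))"
  have V: "?V > 0" by simp
  have disj: "disjoint_family_on (\<lambda>p. ball p (\<delta>/2)) P"
    unfolding disjoint_family_on_def
  proof (intro ballI impI)
    fix p q assume pq: "p \<in> P" "q \<in> P" "p \<noteq> q"
    show "ball p (\<delta>/2) \<inter> ball q (\<delta>/2) = {}"
    proof (rule ccontr)
      assume "ball p (\<delta>/2) \<inter> ball q (\<delta>/2) \<noteq> {}"
      then obtain x where "dist p x < \<delta>/2" "dist q x < \<delta>/2" by auto
      then have "dist p q < \<delta>" using dist_triangle3[of p q x] by (simp add: dist_commute)
      with sep pq show False by force
    qed
  qed
  have "measure lborel (\<Union>p\<in>P. ball p (\<delta>/2)) = (\<Sum>p\<in>P. measure lborel (ball p (\<delta>/2)))"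
    by (rule measure_finite_Union[OF fin]) (use d in \<open>auto simp: disj emeasure_ball[of "\<delta>/2"]\<close>)
  also have "\<dots> = real (card P) * (?V * (\<delta>/2) ^ DIM('a))"
    using d by (simp add: content_ball)
  finally have eq: "measure lborel (\<Union>p\<in>P. ball p (\<delta>/2)) = real (card P) * (?V * (\<delta>/2) ^ DIM('a))" .
  have "(\<Union>p\<in>P. ball p (\<delta>/2)) \<subseteq> ball 0 (1 + \<delta>/2)"
  proof
    fix x assume "x \<in> (\<Union>p\<in>P. ball p (\<delta>/2))"
    then obtain p where "p \<in> P" "dist p x < \<delta>/2" by auto
    moreover have "norm p \<le> 1" using sub \<open>p \<in> P\<close> by auto
    ultimately show "x \<in> ball 0 (1 + \<delta>/2)"
      using norm_triangle_ineq[of p "x - p"] by (simp add: dist_norm norm_minus_commute)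
  qed
  then have "measure lborel (\<Union>p\<in>P. ball p (\<delta>/2)) \<le> measure lborel (ball (0::'a) (1 + \<delta>/2))"
  proof (rule measure_mono_fmeasurable)
    show "(\<Union>p\<in>P. ball p (\<delta>/2)) \<in> sets lborel" by (simp add: borel_open open_UN)
    show "ball (0::'a) (1 + \<delta>/2) \<in> fmeasurable lborel"
      using d by (simp add: fmeasurable_def emeasure_ball[of "1+\<delta>/2"] borel_open)
  qed
  also have "\<dots> = ?V * (1 + \<delta>/2) ^ DIM('a)" using d by (simp add: content_ball)
  finally have "real (card P) * (?V * (\<delta>/2) ^ DIM('a)) \<le> ?V * (1 + \<delta>/2) ^ DIM('a)" using eq by simp
  then have "real (card P) * (\<delta>/2) ^ DIM('a) \<le> (1 + \<delta>/2) ^ DIM('a)"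
    using V by (simp add: mult.left_commute)
  then have "real (card P) \<le> (1 + \<delta>/2) ^ DIM('a) / (\<delta>/2) ^ DIM('a)"
    using d by (simp add: field_simps)
  also have "\<dots> = ((1 + \<delta>/2) / (\<delta>/2)) ^ DIM('a)"
    by (rule power_divide[symmetric])
  also have "(1 + \<delta>/2) / (\<delta>/2) = (2+\<delta>)/\<delta>"
    using d by (simp add: field_simps)
  finally show ?thesis .
qed

lemma vol_cover:
  fixes S :: "'a::euclidean_space set"
  assumes sub: "S \<subseteq> cball 0 1" and d: "\<delta> > 0"
  shows "\<exists>C. finite C \<and> C \<subseteq> S \<and> (\<forall>x\<in>S. \<exists>c\<in>C. dist x c \<le> \<delta>) \<and> real (card C) \<le> ((2+\<delta>)/\<delta>) ^ DIM('a)"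
proof -
  define Q where "Q P \<longleftrightarrow> finite P \<and> P \<subseteq> S \<and> (\<forall>p\<in>P. \<forall>q\<in>P. p \<noteq> q \<longrightarrow> dist p q > \<delta>)" for P
  define B where "B = ((2+\<delta>)/\<delta>) ^ DIM('a)"
  have bnd: "real (card P) \<le> B" if "Q P" for P
    using packing_card[of P \<delta>] that sub d unfolding Q_def B_def by auto
  have "Q {}" by (simp add: Q_def)
  moreover have "\<forall>P. Q P \<longrightarrow> card P < nat \<lceil>B\<rceil> + 1"
  proof (intro allI impI)
    fix P assume "Q P"
    then have "real (card P) \<le> B" by (rule bnd)
    then have "card P \<le> nat \<lceil>B\<rceil>" by linarith
    then show "card P < nat \<lceil>B\<rceil> + 1" by simp
  qed
  ultimately obtain P where QP: "Q P" and mx: "\<forall>P'. Q P' \<longrightarrow> card P' \<le> card P"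
    using ex_has_greatest_nat[of Q "{}" card] by blast
  have cov: "\<forall>x\<in>S. \<exists>c\<in>P. dist x c \<le> \<delta>"
  proof (rule ccontr)
    assume "\<not> (\<forall>x\<in>S. \<exists>c\<in>P. dist x c \<le> \<delta>)"
    then obtain x where x: "x \<in> S" "\<forall>c\<in>P. dist x c > \<delta>" by force
    then have xP: "x \<notin> P" using d by force
    have "Q (insert x P)" using QP x unfolding Q_def by (auto simp: dist_commute)
    then have "card (insert x P) \<le> card P" using mx by blast
    then show False using xP QP by (simp add: Q_def)
  qed
  show ?thesis using QP cov bnd[OF QP] unfolding Q_def B_def by blast
qed


lemma exists_le_avg:
  fixes f p :: "'i \<Rightarrow> real"
  assumes fin: "finite I" and p: "\<forall>i\<in>I. p i \<ge> 0" and s1: "sum p I = 1"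
    and avg: "(\<Sum>i\<in>I. p i * f i) \<le> c"
  shows "\<exists>i\<in>I. f i \<le> c"
proof (rule ccontr)
  assume "\<not> (\<exists>i\<in>I. f i \<le> c)"
  then have gt: "\<forall>i\<in>I. f i > c" by force
  have "(\<Sum>i\<in>I. p i * (f i - c)) = (\<Sum>i\<in>I. p i * f i) - c"
    using s1 by (simp add: right_diff_distrib sum_subtractf flip: sum_distrib_right)
  then have le0: "(\<Sum>i\<in>I. p i * (f i - c)) \<le> 0" using avg by simp
  have ge0: "\<forall>i\<in>I. p i * (f i - c) \<ge> 0" using p gt by (simp add: less_imp_le)
  then have "\<forall>i\<in>I. p i * (f i - c) = 0"
    using sum_nonneg_eq_0_iff[OF fin, of "\<lambda>i. p i * (f i - c)"] le0
    by (metis (no_types, lifting) antisym sum_nonneg)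
  then have "\<forall>i\<in>I. p i = 0" using gt by force
  then have "sum p I = 0" by simp
  then show False using s1 by simp
qed

lemma maurey:
  fixes x :: "'i \<Rightarrow> 'a::real_inner"
  assumes fin: "finite I" and p: "\<forall>i\<in>I. p i \<ge> 0" and s1: "sum p I = 1"
    and mean: "(\<Sum>i\<in>I. p i *\<^sub>R x i) = u" and var: "(\<Sum>i\<in>I. p i * (norm (x i))\<^sup>2) \<le> s"
  shows "\<exists>M. size M = k \<and> set_mset M \<subseteq> x ` I \<and> (norm (sum_mset M - real k *\<^sub>R u))\<^sup>2 \<le> real k * s"
proof (induction k)
  case 0
  show ?case by (rule exI[of _ "{#}"]) simp
next
  case (Suc k)
  then obtain M where M: "size M = k" "set_mset M \<subseteq> x ` I" "(norm (sum_mset M - real k *\<^sub>R u))\<^sup>2 \<le> real k * s"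
    by blast
  define D where "D = sum_mset M - real k *\<^sub>R u"
  have z: "(\<Sum>i\<in>I. p i *\<^sub>R (x i - u)) = 0"
    using mean s1 by (simp add: scaleR_diff_right sum_subtractf scaleR_sum_left[symmetric])
  have v2: "(\<Sum>i\<in>I. p i * (norm (x i - u))\<^sup>2) \<le> s"
  proof -
    have "(\<Sum>i\<in>I. p i * (norm (x i - u))\<^sup>2) = (\<Sum>i\<in>I. p i * (norm (x i))\<^sup>2 - 2 * inner (p i *\<^sub>R x i) u + p i * (norm u)\<^sup>2)"
      by (intro sum.cong refl) (simp add: power2_norm_eq_inner inner_diff_left inner_diff_right inner_commute algebra_simps)
    also have "\<dots> = (\<Sum>i\<in>I. p i * (norm (x i))\<^sup>2) - 2 * inner (\<Sum>i\<in>I. p i *\<^sub>R x i) u + (\<Sum>i\<in>I. p i) * (norm u)\<^sup>2"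
      by (simp add: sum.distrib sum_subtractf inner_sum_left sum_distrib_left sum_distrib_right)
    also have "\<dots> = (\<Sum>i\<in>I. p i * (norm (x i))\<^sup>2) - (norm u)\<^sup>2"
      using mean s1 by (simp add: power2_norm_eq_inner)
    finally show ?thesis using var by (smt (verit) zero_le_power2)
  qed
  have "(\<Sum>i\<in>I. p i * (norm (D + (x i - u)))\<^sup>2) = (\<Sum>i\<in>I. p i * (norm D)\<^sup>2 + 2 * inner D (p i *\<^sub>R (x i - u)) + p i * (norm (x i - u))\<^sup>2)"
    by (intro sum.cong refl) (simp add: power2_norm_eq_inner inner_add_left inner_add_right inner_commute algebra_simps)
  also have "\<dots> = (\<Sum>i\<in>I. p i) * (norm D)\<^sup>2 + 2 * inner D (\<Sum>i\<in>I. p i *\<^sub>R (x i - u)) + (\<Sum>i\<in>I. p i * (norm (x i - u))\<^sup>2)"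
    by (simp add: sum.distrib inner_sum_right sum_distrib_left sum_distrib_right)
  also have "\<dots> = (norm D)\<^sup>2 + (\<Sum>i\<in>I. p i * (norm (x i - u))\<^sup>2)"
    using s1 z by simp
  also have "\<dots> \<le> real k * s + s" using M(3) v2 unfolding D_def by simp
  finally obtain i where i: "i \<in> I" "(norm (D + (x i - u)))\<^sup>2 \<le> real k * s + s"
    using exists_le_avg[OF fin p s1, of "\<lambda>i. (norm (D + (x i - u)))\<^sup>2"] by blast
  have "sum_mset (add_mset (x i) M) - real (Suc k) *\<^sub>R u = D + (x i - u)"
    unfolding D_def by (simp add: algebra_simps)
  then show ?case using i M
    by (intro exI[of _ "add_mset (x i) M"]) (auto simp: algebra_simps)
qed


definition atoms :: "real \<Rightarrow> (real ^ 'n) set" where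
  "atoms s = range (\<lambda>(i, b). (if b then sqrt s else - sqrt s) *\<^sub>R axis i (1::real))"

lemma card_atoms: "card (atoms s :: (real^'n) set) \<le> 2 * CARD('n)"
proof -
  have "card (atoms s :: (real^'n) set) \<le> card (UNIV :: ('n \<times> bool) set)"
    unfolding atoms_def by (rule card_image_le) simp
  also have "\<dots> = 2 * CARD('n)" by (simp add: card_UNIV_bool)
  finally show ?thesis .
qed

lemma finite_atoms: "finite (atoms s :: (real^'n) set)"
  unfolding atoms_def by simp

lemma sum_pair_bool: "(\<Sum>ij\<in>(UNIV::('n::finite \<times> bool) set). g ij) = (\<Sum>i\<in>UNIV. g (i,True) + g (i,False))"
proof -
  have "(\<Sum>ij\<in>(UNIV::('n \<times> bool) set). g ij) = (\<Sum>ij\<in>(UNIV::'n set) \<times> (UNIV :: bool set). g ij)"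
    by simp
  also have "\<dots> = (\<Sum>i\<in>UNIV. \<Sum>b\<in>UNIV. g (i,b))"
    unfolding sum.cartesian_product by simp
  also have "\<dots> = (\<Sum>i\<in>UNIV. g (i,True) + g (i,False))"
    by (simp add: UNIV_bool add.commute)
  finally show ?thesis .
qed

lemma maurey_vec:
  fixes u :: "real ^ 'n"
  assumes l1: "l1norm u \<le> sqrt s" and s: "s > 0"
  shows "\<exists>M. size M = k \<and> set_mset M \<subseteq> atoms s \<and> (norm (sum_mset M - real k *\<^sub>R u))\<^sup>2 \<le> real k * s"
proof -
  define c where "c = sqrt s"
  have c: "c > 0" using s by (simp add: c_def)
  define i0 :: 'n where "i0 = undefined"
  define r where "r = (1 - l1norm u / c) / 2"
  define x :: "'n \<times> bool \<Rightarrow> real^'n" where "x = (\<lambda>(i, b). (if b then c else - c) *\<^sub>R axis i (1::real))"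
  define p :: "'n \<times> bool \<Rightarrow> real" where
    "p = (\<lambda>(i, b). (if b then max (u$i) 0 else max (- u$i) 0) / c + (if i = i0 then r else 0))"
  have r0: "r \<ge> 0" using l1 c unfolding r_def c_def by (simp add: field_simps)
  have p0: "\<forall>ij\<in>UNIV. p ij \<ge> 0" using r0 c by (auto simp: p_def)
  have "sum p UNIV = (\<Sum>i\<in>UNIV. \<bar>u$i\<bar> / c + (if i = i0 then 2*r else 0))"
    unfolding sum_pair_bool by (intro sum.cong refl) (auto simp: p_def add_divide_distrib[symmetric])
  also have "\<dots> = l1norm u / c + 2 * r"
    by (simp add: sum.distrib l1norm_def sum_divide_distrib)
  also have "\<dots> = 1" using c by (simp add: r_def field_simps)
  finally have s1: "sum p UNIV = 1" .
  have "(\<Sum>ij\<in>UNIV. p ij *\<^sub>R x ij) = (\<Sum>i\<in>UNIV. (u$i) *\<^sub>R axis i (1::real))"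
    unfolding sum_pair_bool
  proof (intro sum.cong refl)
    fix i
    have "max (u$i) 0 - max (- u$i) 0 = u$i" by simp
    then show "p (i, True) *\<^sub>R x (i, True) + p (i, False) *\<^sub>R x (i, False) = u $ i *\<^sub>R axis i 1"
      using c by (auto simp: p_def x_def algebra_simps divide_simps simp flip: scaleR_add_left)
  qed
  also have "\<dots> = u" using basis_expansion[of u] by (simp add: scalar_mult_eq_scaleR)
  finally have mean: "(\<Sum>ij\<in>UNIV. p ij *\<^sub>R x ij) = u" .
  have "(\<Sum>ij\<in>UNIV. p ij * (norm (x ij))\<^sup>2) = (\<Sum>ij\<in>UNIV. p ij * s)"
    using s by (intro sum.cong refl) (auto simp: x_def c_def split: if_splits)
  also have "\<dots> = s" using s1 by (simp flip: sum_distrib_right)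
  finally have var: "(\<Sum>ij\<in>UNIV. p ij * (norm (x ij))\<^sup>2) \<le> s" by simp
  have "x ` UNIV = atoms s" unfolding x_def atoms_def c_def by simp
  then show ?thesis using maurey[OF _ p0 s1 mean var, of k] by simp
qed


lemma pow_le_exp_fact: "real k ^ k / fact k \<le> exp (real k)"
proof -
  have "(\<Sum>n\<in>{k}. real k ^ n /\<^sub>R fact n) \<le> (\<Sum>n. real k ^ n /\<^sub>R fact n)"
    by (rule sum_le_suminf) (auto simp: summable_exp)
  then show ?thesis by (simp add: exp_def divide_inverse_commute)
qed

lemma ln_choose_le:
  assumes k: "1 \<le> k" and kN: "k \<le> N"
  shows "ln (real (N choose k)) \<le> real k * (1 + ln (real N / real k))"
proof -
  have pos: "0 < real (N choose k)" using kN by simp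
  have "real (N choose k) * fact k \<le> real N ^ k"
    using binomial_fact_pow[of N k] by (metis of_nat_fact of_nat_le_iff of_nat_mult of_nat_power)
  then have "real (N choose k) \<le> real N ^ k / fact k" by (simp add: field_simps)
  also have "\<dots> = (real N / real k) ^ k * (real k ^ k / fact k)"
    using k by (simp add: power_divide)
  also have "\<dots> \<le> (real N / real k) ^ k * exp (real k)"
    by (intro mult_left_mono pow_le_exp_fact) simp
  finally have le: "real (N choose k) \<le> (real N / real k) ^ k * exp (real k)" .
  have "ln (real (N choose k)) \<le> ln ((real N / real k) ^ k * exp (real k))"
    using le pos by (subst ln_le_cancel_iff) (auto intro: less_le_trans[OF pos le])
  also have "\<dots> = real k * ln (real N / real k) + real k"
    using k kN by (simp add: ln_mult ln_realpow)
  finally show ?thesis by (simp add: algebra_simps)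
qed

lemma sparse_cover:
  fixes S :: "(real ^ 'n) set"
  assumes S: "\<forall>u\<in>S. l1norm u \<le> sqrt s \<and> norm u \<le> 1" and s: "s > 0" and d: "\<delta> > 0"
    and k: "real k \<ge> s / \<delta>\<^sup>2" and k1: "k \<ge> 1"
  shows "\<exists>C. finite C \<and> (\<forall>c\<in>C. norm c \<le> 1 + \<delta>) \<and> (\<forall>u\<in>S. \<exists>c\<in>C. dist u c \<le> \<delta>)
     \<and> card C \<le> (2 * CARD('n) + k - 1) choose k"
proof -
  define C where "C = {c \<in> (\<lambda>M. (1 / real k) *\<^sub>R sum_mset M) ` multisets_of_size (atoms s :: (real^'n) set) k. norm c \<le> 1 + \<delta>}"
  have finM: "finite (multisets_of_size (atoms s :: (real^'n) set) k)"
    by (simp add: finite_multisets_of_size finite_atoms)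
  have fin: "finite C" unfolding C_def using finM by simp
  have "card C \<le> card ((\<lambda>M. (1 / real k) *\<^sub>R sum_mset M) ` multisets_of_size (atoms s :: (real^'n) set) k)"
    unfolding C_def by (intro card_mono finite_imageI finM) auto
  also have "\<dots> \<le> card (multisets_of_size (atoms s :: (real^'n) set) k)" by (rule card_image_le[OF finM])
  also have "\<dots> = (card (atoms s :: (real^'n) set) + k - 1) choose k"
    by (simp add: card_multisets_of_size finite_atoms)
  also have "\<dots> \<le> (2 * CARD('n) + k - 1) choose k"
  proof -
    have "card (atoms s :: (real^'n) set) + k - 1 \<le> 2 * CARD('n) + k - 1" using card_atoms[where 'n='n, of s] by simp
    then show ?thesis by (rule binomial_right_mono)
  qed
  finally have card: "card C \<le> (2 * CARD('n) + k - 1) choose k" .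
  have cov: "\<forall>u\<in>S. \<exists>c\<in>C. dist u c \<le> \<delta>"
  proof
    fix u assume u: "u \<in> S"
    obtain M where M: "size M = k" "set_mset M \<subseteq> atoms s" "(norm (sum_mset M - real k *\<^sub>R u))\<^sup>2 \<le> real k * s"
      using maurey_vec[of u s k] S u s by blast
    define c where "c = (1 / real k) *\<^sub>R sum_mset M"
    have kpos: "real k > 0" using k1 by simp
    have "c - u = (1 / real k) *\<^sub>R (sum_mset M - real k *\<^sub>R u)"
      using kpos by (simp add: c_def algebra_simps)
    then have "(norm (c - u))\<^sup>2 = (norm (sum_mset M - real k *\<^sub>R u))\<^sup>2 / (real k)\<^sup>2"
      using kpos by (simp add: power_divide)
    also have "\<dots> \<le> real k * s / (real k)\<^sup>2"
      using M(3) kpos by (simp add: divide_right_mono)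
    also have "\<dots> = s / real k" using kpos by (simp add: power2_eq_square)
    also have "\<dots> \<le> \<delta>\<^sup>2"
      using k kpos d s by (simp add: divide_simps mult.commute)
    finally have "(norm (c - u))\<^sup>2 \<le> \<delta>\<^sup>2" .
    then have dist: "dist u c \<le> \<delta>" using d by (simp add: dist_norm norm_minus_commute power2_le_iff_abs_le)
    have "norm c \<le> norm u + dist u c"
      using norm_triangle_ineq[of u "c - u"] by (simp add: dist_norm norm_minus_commute)
    then have "norm c \<le> 1 + \<delta>" using dist S u by force
    moreover have "M \<in> multisets_of_size (atoms s) k" using M by (simp add: multisets_of_size_def)
    ultimately have "c \<in> C" unfolding C_def c_def by blast
    then show "\<exists>c\<in>C. dist u c \<le> \<delta>" using dist by blast
  qed
  show ?thesis using fin card cov unfolding C_def by blast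
qed


lemma norm_outer: "norm (outer u v) = norm u * norm v"
proof -
  have "outer u v = (\<chi> i. u$i *\<^sub>R v)" by (simp add: outer_def vec_eq_iff)
  then have "norm (outer u v) = L2_set (\<lambda>i. norm (u$i *\<^sub>R v)) UNIV"
    by (simp add: norm_vec_def)
  also have "\<dots> = L2_set (\<lambda>i. norm v * \<bar>u$i\<bar>) UNIV"
    by (simp add: mult.commute)
  also have "\<dots> = norm v * norm u"
    by (simp add: L2_set_right_distrib[symmetric] norm_vec_def[of u])
  finally show ?thesis by simp
qed

lemma outer_diff_left: "outer (u - u') v = outer u v - outer u' v"
  by (simp add: outer_def vec_eq_iff algebra_simps)

lemma outer_diff_right: "outer u (v - v') = outer u v - outer u v'"
  by (simp add: outer_def vec_eq_iff algebra_simps)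

lemma sum_abs_le_sqrt:
  fixes \<sigma> :: "nat \<Rightarrow> real"
  shows "(\<Sum>r<R. \<bar>\<sigma> r\<bar>) \<le> sqrt (real R) * sqrt (\<Sum>r<R. (\<sigma> r)\<^sup>2)"
proof -
  have "(\<Sum>r<R. \<bar>\<sigma> r\<bar>)\<^sup>2 \<le> (\<Sum>r<R. (\<sigma> r)\<^sup>2) * real R"
    using sum_squared_le_sum_of_squares[of "\<lambda>r. \<bar>\<sigma> r\<bar>" "{..<R}"] by simp
  then have "sqrt ((\<Sum>r<R. \<bar>\<sigma> r\<bar>)\<^sup>2) \<le> sqrt ((\<Sum>r<R. (\<sigma> r)\<^sup>2) * real R)"
    by (rule real_sqrt_le_mono)
  then show ?thesis by (simp add: real_sqrt_mult mult.commute sum_nonneg)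
qed

lemma term_bound:
  fixes u u' :: "real^'m" and v v' :: "real^'n"
  assumes "norm u = 1" "norm v = 1" "norm (u - u') \<le> d1" "norm u' \<le> 1 + d1" "norm (v - v') \<le> d2"
    and "d1 \<ge> 0" "d2 \<ge> 0"
  shows "norm (a *\<^sub>R outer u v - b *\<^sub>R outer u' v') \<le> \<bar>a - b\<bar> + \<bar>b\<bar> * (d1 + (1 + d1) * d2)"
proof -
  have eq: "a *\<^sub>R outer u v - b *\<^sub>R outer u' v' = (a - b) *\<^sub>R outer u v + b *\<^sub>R (outer (u - u') v + outer u' (v - v'))"
    by (simp add: outer_diff_left outer_diff_right algebra_simps)
  have n1: "norm (outer (u - u') v) \<le> d1" using assms by (simp add: norm_outer)
  have n2: "norm (outer u' (v - v')) \<le> (1 + d1) * d2"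
    unfolding norm_outer using assms by (intro mult_mono) auto
  have "norm (a *\<^sub>R outer u v - b *\<^sub>R outer u' v') \<le> norm ((a - b) *\<^sub>R outer u v) + norm (b *\<^sub>R (outer (u - u') v + outer u' (v - v')))"
    unfolding eq by (rule norm_triangle_ineq)
  also have "\<dots> \<le> \<bar>a - b\<bar> + \<bar>b\<bar> * (d1 + (1 + d1) * d2)"
  proof -
    have "norm (outer (u - u') v + outer u' (v - v')) \<le> d1 + (1 + d1) * d2"
      using norm_triangle_ineq[of "outer (u - u') v" "outer u' (v - v')"] n1 n2 by linarith
    then have "\<bar>b\<bar> * norm (outer (u - u') v + outer u' (v - v')) \<le> \<bar>b\<bar> * (d1 + (1 + d1) * d2)"
      by (rule mult_left_mono) simp
    then show ?thesis using assms by (simp add: norm_outer)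
  qed
  finally show ?thesis .
qed

lemma covering_number_le:
  assumes "finite C" "M \<subseteq> (\<Union>c\<in>C. cball c eps)"
  shows "covering_number M eps \<le> card C"
  unfolding covering_number_def using assms by (intro cInf_lower) auto

lemma compose_cover:
  fixes G :: "(nat \<Rightarrow> real) set" and U :: "(real^'m) set" and V :: "(real^'n) set"
  assumes fG: "finite G" and fU: "finite U" and fV: "finite V"
    and Gc: "\<forall>\<sigma>. sqrt (\<Sum>r<R. (\<sigma> r)\<^sup>2) \<le> \<Gamma> \<longrightarrow> (\<exists>\<sigma>'\<in>G. (\<Sum>r<R. \<bar>\<sigma> r - \<sigma>' r\<bar>) \<le> \<eta> \<and> (\<Sum>r<R. \<bar>\<sigma>' r\<bar>) \<le> B)"
    and Uc: "\<forall>u. u \<in> Kns s1 \<and> norm u = 1 \<longrightarrow> (\<exists>u'\<in>U. norm (u - u') \<le> d1)"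
    and Ub: "\<forall>u'\<in>U. norm u' \<le> 1 + d1"
    and Vc: "\<forall>v. v \<in> Kns s2 \<and> norm v = 1 \<longrightarrow> (\<exists>v'\<in>V. norm (v - v') \<le> d2)"
    and d: "d1 \<ge> 0" "d2 \<ge> 0" and tot: "\<eta> + B * (d1 + (1 + d1) * d2) \<le> eps"
  shows "real (covering_number (KRG R \<Gamma> s1 s2 :: (real^'n^'m) set) eps) \<le> real (card G) * real (card U) ^ R * real (card V) ^ R"
proof -
  define f :: "(nat \<Rightarrow> real) \<times> (nat \<Rightarrow> real^'m) \<times> (nat \<Rightarrow> real^'n) \<Rightarrow> real^'n^'m"
    where "f = (\<lambda>(\<sigma>', uu, vv). \<Sum>r<R. \<sigma>' r *\<^sub>R outer (uu r) (vv r))"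
  define D where "D = G \<times> (PiE {..<R} (\<lambda>_. U)) \<times> (PiE {..<R} (\<lambda>_. V))"
  have fD: "finite D" unfolding D_def using fG fU fV by (simp add: finite_PiE)
  have cD: "card D = card G * card U ^ R * card V ^ R"
    unfolding D_def by (simp add: card_cartesian_product card_PiE)
  have cov: "KRG R \<Gamma> s1 s2 \<subseteq> (\<Union>c\<in>f ` D. cball c eps)"
  proof
    fix Z assume "Z \<in> (KRG R \<Gamma> s1 s2 :: (real^'n^'m) set)"
    then obtain \<sigma> u v where Z: "Z = (\<Sum>r<R. \<sigma> r *\<^sub>R outer (u r) (v r))"
      and uv: "\<forall>r<R. u r \<in> Kns s1 \<and> v r \<in> Kns s2 \<and> norm (u r) = 1 \<and> norm (v r) = 1"
      and sg: "sqrt (\<Sum>r<R. (\<sigma> r)\<^sup>2) \<le> \<Gamma>"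
      unfolding KRG_def by blast
    obtain \<sigma>' where \<sigma>': "\<sigma>' \<in> G" "(\<Sum>r<R. \<bar>\<sigma> r - \<sigma>' r\<bar>) \<le> \<eta>" "(\<Sum>r<R. \<bar>\<sigma>' r\<bar>) \<le> B"
      using Gc sg by blast
    define uu where "uu = (\<lambda>r. if r < R then (SOME u'. u' \<in> U \<and> norm (u r - u') \<le> d1) else undefined)"
    define vv where "vv = (\<lambda>r. if r < R then (SOME v'. v' \<in> V \<and> norm (v r - v') \<le> d2) else undefined)"
    have uu: "uu r \<in> U \<and> norm (u r - uu r) \<le> d1" if "r < R" for r
    proof -
      have "\<exists>u'. u' \<in> U \<and> norm (u r - u') \<le> d1" using Uc uv that by blast
      from someI_ex[OF this] show ?thesis unfolding uu_def using that by simp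
    qed
    have vv: "vv r \<in> V \<and> norm (v r - vv r) \<le> d2" if "r < R" for r
    proof -
      have "\<exists>v'. v' \<in> V \<and> norm (v r - v') \<le> d2" using Vc uv that by blast
      from someI_ex[OF this] show ?thesis unfolding vv_def using that by simp
    qed
    have inD: "(\<sigma>', uu, vv) \<in> D"
      unfolding D_def using \<sigma>'(1) uu vv by (auto simp: PiE_def extensional_def uu_def vv_def)
    have "dist Z (f (\<sigma>', uu, vv)) = norm (\<Sum>r<R. \<sigma> r *\<^sub>R outer (u r) (v r) - \<sigma>' r *\<^sub>R outer (uu r) (vv r))"
      by (simp add: Z f_def dist_norm sum_subtractf)
    also have "\<dots> \<le> (\<Sum>r<R. norm (\<sigma> r *\<^sub>R outer (u r) (v r) - \<sigma>' r *\<^sub>R outer (uu r) (vv r)))"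
      by (rule norm_sum)
    also have "\<dots> \<le> (\<Sum>r<R. \<bar>\<sigma> r - \<sigma>' r\<bar> + \<bar>\<sigma>' r\<bar> * (d1 + (1 + d1) * d2))"
    proof (rule sum_mono)
      fix r assume "r \<in> {..<R}"
      then have r: "r < R" by simp
      show "norm (\<sigma> r *\<^sub>R outer (u r) (v r) - \<sigma>' r *\<^sub>R outer (uu r) (vv r)) \<le> \<bar>\<sigma> r - \<sigma>' r\<bar> + \<bar>\<sigma>' r\<bar> * (d1 + (1 + d1) * d2)"
        using uu[OF r] vv[OF r] uv r Ub d by (intro term_bound) auto
    qed
    also have "\<dots> = (\<Sum>r<R. \<bar>\<sigma> r - \<sigma>' r\<bar>) + (\<Sum>r<R. \<bar>\<sigma>' r\<bar>) * (d1 + (1 + d1) * d2)"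
      by (simp add: sum.distrib sum_distrib_right)
    also have "\<dots> \<le> \<eta> + B * (d1 + (1 + d1) * d2)"
      using \<sigma>' d by (intro add_mono mult_right_mono) auto
    also have "\<dots> \<le> eps" by (rule tot)
    finally show "Z \<in> (\<Union>c\<in>f ` D. cball c eps)" using inD by (auto simp: dist_commute)
  qed
  have "covering_number (KRG R \<Gamma> s1 s2 :: (real^'n^'m) set) eps \<le> card (f ` D)"
    by (rule covering_number_le) (use fD cov in auto)
  also have "\<dots> \<le> card D" by (rule card_image_le[OF fD])
  finally show ?thesis unfolding cD by (metis of_nat_le_iff of_nat_mult of_nat_power)
qed


lemma abs_le_sqrt_sum:
  fixes \<sigma> :: "nat \<Rightarrow> real"
  assumes "r < R"
  shows "\<bar>\<sigma> r\<bar> \<le> sqrt (\<Sum>r<R. (\<sigma> r)\<^sup>2)"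
proof -
  have "(\<sigma> r)\<^sup>2 \<le> (\<Sum>r<R. (\<sigma> r)\<^sup>2)"
    using assms by (intro member_le_sum) auto
  then show ?thesis by (metis real_le_rsqrt real_sqrt_abs real_sqrt_le_mono)
qed

lemma sigma_grid:
  assumes h: "h > 0" and \<Gamma>: "\<Gamma> \<ge> 0"
  shows "\<exists>G. finite G \<and> real (card G) \<le> (2 * \<Gamma> / h + 2) ^ R \<and>
    (\<forall>\<sigma>. sqrt (\<Sum>r<R. (\<sigma> r)\<^sup>2) \<le> \<Gamma> \<longrightarrow> (\<exists>\<sigma>'\<in>G. (\<Sum>r<R. \<bar>\<sigma> r - \<sigma>' r\<bar>) \<le> real R * h \<and> (\<Sum>r<R. \<bar>\<sigma>' r\<bar>) \<le> (\<Sum>r<R. \<bar>\<sigma> r\<bar>) + real R * h))"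
proof -
  define lo where "lo = \<lfloor>- \<Gamma> / h\<rfloor>"
  define hi where "hi = \<lfloor>\<Gamma> / h\<rfloor>"
  define Gv where "Gv = (\<lambda>j. h * real_of_int j) ` {lo..hi}"
  define G where "G = PiE {..<R} (\<lambda>_. Gv)"
  have fG: "finite G" unfolding G_def Gv_def by (simp add: finite_PiE)
  have "card Gv \<le> card {lo..hi}" unfolding Gv_def by (rule card_image_le) simp
  then have "real (card Gv) \<le> real (nat (hi - lo + 1))" by simp
  also have "\<dots> \<le> 2 * \<Gamma> / h + 2"
  proof -
    have "real_of_int hi \<le> \<Gamma> / h" unfolding hi_def by simp
    moreover have "real_of_int lo > - \<Gamma> / h - 1" unfolding lo_def by linarith
    moreover have "\<Gamma> / h \<ge> 0" using h \<Gamma> by simp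
    ultimately show ?thesis
      by (cases "0 \<le> hi - lo + 1") (simp_all add: of_nat_nat)
  qed
  finally have cGv: "real (card Gv) \<le> 2 * \<Gamma> / h + 2" .
  have "real (card G) = real (card Gv) ^ R" unfolding G_def by (simp add: card_PiE)
  also have "\<dots> \<le> (2 * \<Gamma> / h + 2) ^ R" by (intro power_mono cGv) simp
  finally have cG: "real (card G) \<le> (2 * \<Gamma> / h + 2) ^ R" .
  have approx: "\<exists>\<sigma>'\<in>G. (\<Sum>r<R. \<bar>\<sigma> r - \<sigma>' r\<bar>) \<le> real R * h \<and> (\<Sum>r<R. \<bar>\<sigma>' r\<bar>) \<le> (\<Sum>r<R. \<bar>\<sigma> r\<bar>) + real R * h"
    if sg: "sqrt (\<Sum>r<R. (\<sigma> r)\<^sup>2) \<le> \<Gamma>" for \<sigma> :: "nat \<Rightarrow> real"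
  proof -
    define \<sigma>' where "\<sigma>' = (\<lambda>r. if r < R then h * real_of_int \<lfloor>\<sigma> r / h\<rfloor> else undefined)"
    have in_G: "\<sigma>' \<in> G"
    proof -
      have "\<sigma>' r \<in> Gv" if r: "r < R" for r
      proof -
        have b: "\<bar>\<sigma> r\<bar> \<le> \<Gamma>" using abs_le_sqrt_sum[OF r, of \<sigma>] sg by linarith
        have "- \<Gamma> / h \<le> \<sigma> r / h" "\<sigma> r / h \<le> \<Gamma> / h"
          using b h by (auto simp: divide_right_mono field_simps)
        then have "lo \<le> \<lfloor>\<sigma> r / h\<rfloor>" "\<lfloor>\<sigma> r / h\<rfloor> \<le> hi"
          unfolding lo_def hi_def by (auto intro: floor_mono)
        then show ?thesis unfolding Gv_def \<sigma>'_def using r by auto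
      qed
      then show ?thesis unfolding G_def by (auto simp: PiE_def extensional_def \<sigma>'_def)
    qed
    have e: "\<bar>\<sigma> r - \<sigma>' r\<bar> \<le> h" if "r < R" for r
    proof -
      have "real_of_int \<lfloor>\<sigma> r / h\<rfloor> \<le> \<sigma> r / h" "\<sigma> r / h < real_of_int \<lfloor>\<sigma> r / h\<rfloor> + 1"
        by linarith+
      then have "h * real_of_int \<lfloor>\<sigma> r / h\<rfloor> \<le> h * (\<sigma> r / h)" "h * (\<sigma> r / h) < h * (real_of_int \<lfloor>\<sigma> r / h\<rfloor> + 1)"
        using h by (intro mult_left_mono mult_strict_left_mono; simp)+
      then have "h * real_of_int \<lfloor>\<sigma> r / h\<rfloor> \<le> \<sigma> r" "\<sigma> r < h * real_of_int \<lfloor>\<sigma> r / h\<rfloor> + h"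
        using h by (simp_all add: algebra_simps)
      then show ?thesis unfolding \<sigma>'_def using that by auto
    qed
    have "(\<Sum>r<R. \<bar>\<sigma> r - \<sigma>' r\<bar>) \<le> (\<Sum>r<R. h)" by (rule sum_mono) (use e in auto)
    then have s1: "(\<Sum>r<R. \<bar>\<sigma> r - \<sigma>' r\<bar>) \<le> real R * h" by simp
    have "(\<Sum>r<R. \<bar>\<sigma>' r\<bar>) \<le> (\<Sum>r<R. \<bar>\<sigma> r\<bar> + h)"
    proof (rule sum_mono)
      fix r assume "r \<in> {..<R}"
      then show "\<bar>\<sigma>' r\<bar> \<le> \<bar>\<sigma> r\<bar> + h" using e[of r] by auto
    qed
    then have s2: "(\<Sum>r<R. \<bar>\<sigma>' r\<bar>) \<le> (\<Sum>r<R. \<bar>\<sigma> r\<bar>) + real R * h" by (simp add: sum.distrib)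
    show ?thesis using in_G s1 s2 by blast
  qed
  show ?thesis using fG cG approx by blast
qed


lemma maurey_arith:
  fixes a s L :: real and n :: nat
  assumes a: "0 < a" "a \<le> 1" and s: "s \<ge> 1" and n: "n \<ge> 1"
    and y: "real n * a\<^sup>2 / s \<ge> 144" and L: "L \<ge> ln (real n * a\<^sup>2 / s)"
  shows "ln (real ((2 * n + nat \<lceil>25 * s / a\<^sup>2\<rceil> - 1) choose nat \<lceil>25 * s / a\<^sup>2\<rceil>)) \<le> 144 * (s / a\<^sup>2) * L"
proof -
  define x where "x = s / a\<^sup>2"
  define k where "k = nat \<lceil>25 * s / a\<^sup>2\<rceil>"
  define yy where "yy = real n * a\<^sup>2 / s"
  have a2: "0 < a\<^sup>2" "a\<^sup>2 \<le> 1" using a by (auto simp: power_le_one)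
  have x1: "x \<ge> 1" unfolding x_def using s a2 by (simp add: field_simps)
  have k25: "real k \<ge> 25 * x" unfolding k_def x_def by linarith
  have k26: "real k \<le> 26 * x" unfolding k_def x_def using x1[unfolded x_def] by linarith
  have k1: "k \<ge> 1" using k25 x1 by linarith
  have yyx: "yy = real n / x" unfolding yy_def x_def using a2 s by (simp add: field_simps)
  have ln4: "ln yy \<ge> 4"
  proof -
    have "exp (4::real) \<le> 144"
    proof -
      have "exp (1::real) \<le> 3" using exp_le by simp
      then have "exp (1::real) ^ 4 \<le> 3 ^ 4" by (intro power_mono) auto
      then show ?thesis by (simp add: exp_of_nat_mult[symmetric])
    qed
    then have "exp 4 \<le> yy" using y unfolding yy_def by linarith
    then show ?thesis by (metis exp_gt_zero ln_exp ln_mono)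
  qed
  define N where "N = 2 * n + k - 1"
  have kN: "k \<le> N" unfolding N_def using n by simp
  have "ln (real (N choose k)) \<le> real k * (1 + ln (real N / real k))"
    by (rule ln_choose_le[OF k1 kN])
  also have "\<dots> \<le> real k * (1 + ln yy)"
  proof -
    have kp: "real k > 0" using k1 by simp
    have "real N \<le> 2 * real n + real k" unfolding N_def using n by simp
    then have "real N / real k \<le> (2 * real n + real k) / real k" using kp by (simp add: divide_right_mono)
    also have "\<dots> = 2 * real n / real k + 1" using kp by (simp add: field_simps)
    also have "\<dots> \<le> 2 * real n / (25 * x) + 1"
      using kp k25 x1 by (intro add_right_mono divide_left_mono) auto
    also have "\<dots> = 2 / 25 * yy + 1" using yyx x1 by simp
    also have "\<dots> \<le> yy" using y yy_def by linarith
    finally have "real N / real k \<le> yy" .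
    moreover have "real N / real k > 0" using kN kp k1 by simp
    ultimately have "ln (real N / real k) \<le> ln yy" by simp
    then show ?thesis using kp by (intro mult_left_mono) auto
  qed
  also have "\<dots> \<le> 26 * x * (1 + ln yy)"
    using k26 ln4 by (intro mult_right_mono) auto
  also have "\<dots> \<le> 144 * x * L"
  proof -
    have "1 + ln yy \<le> 144 / 26 * L" using ln4 L unfolding yy_def by simp
    then have "x * (26 * (1 + ln yy)) \<le> x * (144 * L)" using x1 by (intro mult_left_mono) auto
    then show ?thesis by (simp add: algebra_simps)
  qed
  finally show ?thesis unfolding N_def k_def x_def .
qed


lemma vol_U:
  assumes d: "\<delta> > 0"
  shows "\<exists>U :: (real^'m) set. finite U \<and> (\<forall>u. u \<in> Kns s \<and> norm u = 1 \<longrightarrow> (\<exists>u'\<in>U. norm (u - u') \<le> \<delta>))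
     \<and> (\<forall>u'\<in>U. norm u' \<le> 1 + \<delta>) \<and> real (card U) \<le> ((2 + \<delta>) / \<delta>) ^ CARD('m)"
proof -
  define S :: "(real^'m) set" where "S = {u. u \<in> Kns s \<and> norm u = 1}"
  have "S \<subseteq> cball 0 1" unfolding S_def by auto
  then obtain C where C: "finite C" "C \<subseteq> S" "\<forall>x\<in>S. \<exists>c\<in>C. dist x c \<le> \<delta>" "real (card C) \<le> ((2+\<delta>)/\<delta>) ^ DIM(real^'m)"
    using vol_cover[of S \<delta>] d by blast
  have "\<forall>u'\<in>C. norm u' \<le> 1 + \<delta>" using C(2) d unfolding S_def by auto
  then show ?thesis using C unfolding S_def by (intro exI[of _ C]) (auto simp: dist_norm)
qed

lemma sparse_U:
  assumes s: "s \<ge> 1" and d: "\<delta> > 0"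
  shows "\<exists>U :: (real^'m) set. finite U \<and> (\<forall>u. u \<in> Kns s \<and> norm u = 1 \<longrightarrow> (\<exists>u'\<in>U. norm (u - u') \<le> \<delta>))
     \<and> (\<forall>u'\<in>U. norm u' \<le> 1 + \<delta>) \<and> card U \<le> (2 * CARD('m) + nat \<lceil>s / \<delta>\<^sup>2\<rceil> - 1) choose nat \<lceil>s / \<delta>\<^sup>2\<rceil>"
proof -
  define S :: "(real^'m) set" where "S = {u. u \<in> Kns s \<and> norm u = 1}"
  have S: "\<forall>u\<in>S. l1norm u \<le> sqrt s \<and> norm u \<le> 1" unfolding S_def Kns_def by auto
  have k: "real (nat \<lceil>s / \<delta>\<^sup>2\<rceil>) \<ge> s / \<delta>\<^sup>2" by linarith
  have "0 < s / \<delta>\<^sup>2" using s d by simp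
  moreover have "s / \<delta>\<^sup>2 \<le> real_of_int \<lceil>s / \<delta>\<^sup>2\<rceil>" by (rule le_of_int_ceiling)
  ultimately have "0 < \<lceil>s / \<delta>\<^sup>2\<rceil>" by (metis of_int_0_less_iff less_le_trans)
  then have k1: "nat \<lceil>s / \<delta>\<^sup>2\<rceil> \<ge> 1" by (metis One_nat_def Suc_leI zero_less_nat_eq)
  obtain C where C: "finite C" "\<forall>c\<in>C. norm c \<le> 1 + \<delta>" "\<forall>u\<in>S. \<exists>c\<in>C. dist u c \<le> \<delta>"
      "card C \<le> (2 * CARD('m) + nat \<lceil>s / \<delta>\<^sup>2\<rceil> - 1) choose nat \<lceil>s / \<delta>\<^sup>2\<rceil>"
    using sparse_cover[OF S _ d k k1] s by auto
  then show ?thesis unfolding S_def by (intro exI[of _ C]) (auto simp: dist_norm)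
qed

lemma ln_final:
  assumes N: "real N \<le> g * u ^ R * v ^ R" and g: "0 \<le> g" "g \<le> G'" and u: "0 \<le> u" "u \<le> U'"
    and v: "0 \<le> v" "v \<le> V'" and G1: "1 \<le> G'" and U1: "1 \<le> U'" and V1: "1 \<le> V'"
  shows "ln (real N) \<le> ln G' + real R * ln U' + real R * ln V'"
proof (cases "N = 0")
  case True
  have "0 \<le> ln G'" "0 \<le> ln U'" "0 \<le> ln V'" using G1 U1 V1 by auto
  then have "0 \<le> ln G' + real R * ln U' + real R * ln V'" by simp
  then show ?thesis using True by simp
next
  case False
  have uR: "u ^ R \<le> U' ^ R" "v ^ R \<le> V' ^ R" using u v by (auto intro: power_mono)
  have "g * u ^ R \<le> G' * U' ^ R" by (rule mult_mono[OF g(2) uR(1)]) (use G1 u in auto)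
  then have "g * u ^ R * v ^ R \<le> G' * U' ^ R * V' ^ R"
    by (rule mult_mono[OF _ uR(2)]) (use G1 U1 v in auto)
  then have le: "real N \<le> G' * U' ^ R * V' ^ R" using N by linarith
  have pos: "0 < real N" using False by simp
  have "ln (real N) \<le> ln (G' * U' ^ R * V' ^ R)"
    using le pos by (subst ln_le_cancel_iff) (auto intro: less_le_trans[OF pos le])
  also have "ln (G' * U' ^ R * V' ^ R) = ln G' + ln (U' ^ R) + ln (V' ^ R)"
    using G1 U1 V1 by (simp add: ln_mult)
  also have "\<dots> = ln G' + real R * ln U' + real R * ln V'"
    using U1 V1 by (simp add: ln_realpow)
  finally show ?thesis .
qed


lemma cond_y:
  fixes \<Gamma> R s n eps :: real
  assumes "\<Gamma> > 0" "R > 0" "s > 0" "n > 0" "eps > 0"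
    and c: "12 * \<Gamma> * sqrt (R * s / n) \<le> eps"
  shows "n * (eps / (\<Gamma> * sqrt R))\<^sup>2 / s \<ge> 144"
proof -
  have "(12 * \<Gamma> * sqrt (R * s / n))\<^sup>2 \<le> eps\<^sup>2"
    using c assms by (intro power_mono) auto
  then have "144 * \<Gamma>\<^sup>2 * (R * s / n) \<le> eps\<^sup>2"
    using assms by (simp add: power_mult_distrib)
  then have "144 * \<Gamma>\<^sup>2 * R * s \<le> eps\<^sup>2 * n"
    using assms by (simp add: field_simps)
  moreover have "n * (eps / (\<Gamma> * sqrt R))\<^sup>2 / s = eps\<^sup>2 * n / (\<Gamma>\<^sup>2 * R * s)"
    using assms by (simp add: power_divide power_mult_distrib)
  ultimately show ?thesis using assms by (simp add: field_simps)
qed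

lemma tot_arith:
  fixes b eps :: real
  assumes "0 < eps" "eps < b"
  shows "eps / 3 + (b + eps / 3) * (eps / b / 5 + (1 + eps / b / 5) * (eps / b / 5)) \<le> eps"
proof -
  define a where "a = eps / b"
  have a: "0 < a" "a < 1" using assms by (auto simp: a_def)
  have beq: "eps = a * b" using assms by (simp add: a_def)
  have "(b + a * b / 3) * (a / 5 + (1 + a / 5) * (a / 5)) = b * a * ((1 + a/3) * (2/5 + a / 25))"
    by (simp add: algebra_simps)
  also have "\<dots> \<le> b * a * ((4/3) * (11/25))"
    using a assms by (intro mult_left_mono mult_mono) auto
  finally have X: "(b + a * b / 3) * (a / 5 + (1 + a / 5) * (a / 5)) \<le> a * b * (44/75)" by (simp add: mult.commute)
  have e: "eps / b = a" by (simp add: a_def)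
  have "(b + eps / 3) * (eps / b / 5 + (1 + eps / b / 5) * (eps / b / 5)) = (b + a * b / 3) * (a / 5 + (1 + a / 5) * (a / 5))"
    unfolding e using beq by simp
  also have "\<dots> \<le> eps * (44/75)" using X beq by simp
  finally have Y: "(b + eps / 3) * (eps / b / 5 + (1 + eps / b / 5) * (eps / b / 5)) \<le> eps * (44/75)" .
  show ?thesis
    by (rule order_trans[OF add_left_mono[OF Y]]) (use assms in simp)
qed


theorem mainTheorem10:
  fixes R :: nat and \<Gamma> s1 s2 \<epsilon> n1 n2 :: real and N :: nat
  defines "n1 \<equiv> real CARD('m)" and "n2 \<equiv> real CARD('n)"
      and "N \<equiv> covering_number (KRG R \<Gamma> s1 s2 :: (real ^ 'n ^ 'm) set) \<epsilon>"
  assumes "R \<ge> 1" and "\<Gamma> \<ge> 1"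
      and "1 \<le> s1" and "s1 \<le> n1" and "1 \<le> s2" and "s2 \<le> n2"
      and "s1 / n1 \<le> s2 / n2"
      and "0 < \<epsilon>" and "\<epsilon> < 6 * \<Gamma> * sqrt R"
  shows "(\<epsilon> < 12 * \<Gamma> * sqrt (R * s1 / n1) \<longrightarrow>
           ln (real N) \<le> R * (n1 + n2 + 1) * ln (36 * \<Gamma> * R / \<epsilon>))
       \<and> (12 * \<Gamma> * sqrt (R * s1 / n1) \<le> \<epsilon> \<and> \<epsilon> < 12 * \<Gamma> * sqrt (R * s2 / n2) \<longrightarrow>
           ln (real N) \<le> 144 * \<Gamma>\<^sup>2 * R\<^sup>2 * s1 / \<epsilon>\<^sup>2 * ln (9 * \<epsilon> * n1 / (6 * \<Gamma> * sqrt R * s1))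
                         + R * (n2 + 1) * ln (36 * \<Gamma> * R / \<epsilon>))
       \<and> (12 * \<Gamma> * sqrt (R * s2 / n2) \<le> \<epsilon> \<longrightarrow>
           ln (real N) \<le> 144 * \<Gamma>\<^sup>2 * R\<^sup>2 * (s1 + s2) / \<epsilon>\<^sup>2 * ln (9 * \<epsilon> * n1 / (6 * \<Gamma> * sqrt R * s1))
                         + R * ln (18 * \<Gamma> * R / \<epsilon>))"
proof -
  have R1: "1 \<le> real R" using assms(4) by simp
  have G1: "1 \<le> \<Gamma>" using assms(5) .
  have s1: "1 \<le> s1" "s1 \<le> n1" and s2: "1 \<le> s2" "s2 \<le> n2" using assms(6-9) by auto
  have sn: "s1 / n1 \<le> s2 / n2" using assms(10) .
  have e: "0 < \<epsilon>" "\<epsilon> < 6 * \<Gamma> * sqrt R" using assms(11,12) by auto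
  define sR where "sR = sqrt (real R)"
  have sR1: "1 \<le> sR" using R1 by (simp add: sR_def)
  have sR2: "sR * sR = real R" using R1 by (simp add: sR_def)
  have sRR: "sR \<le> real R" using sR1 sR2 mult_left_mono[of 1 sR sR] by simp
  define b where "b = \<Gamma> * sR"
  have b1: "1 \<le> b" using G1 sR1 mult_mono[of 1 \<Gamma> 1 sR] by (simp add: b_def)
  have bGR: "b \<le> \<Gamma> * real R" using sRR G1 by (simp add: b_def)
  have eb: "\<epsilon> < 6 * b" using e by (simp add: b_def sR_def)
  have GR: "1 \<le> \<Gamma> * real R" using G1 R1 mult_mono[of 1 \<Gamma> 1 "real R"] by simp
  have L36: "0 \<le> ln (36 * \<Gamma> * R / \<epsilon>)"
  proof -
    have "\<epsilon> \<le> 36 * (\<Gamma> * R)" using eb bGR GR by linarith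
    then have "1 \<le> 36 * \<Gamma> * R / \<epsilon>" using e by (simp add: mult.assoc)
    then show ?thesis by simp
  qed
  have L18: "0 \<le> ln (18 * \<Gamma> * R / \<epsilon>)"
  proof -
    have "\<epsilon> \<le> 18 * (\<Gamma> * R)" using eb bGR GR by linarith
    then have "1 \<le> 18 * \<Gamma> * R / \<epsilon>" using e by (simp add: mult.assoc)
    then show ?thesis by simp
  qed
  have n1p: "1 \<le> n1" "1 \<le> n2" using s1 s2 by auto
  have L1eq: "9 * \<epsilon> * n1 / (6 * \<Gamma> * sqrt R * s1) = 3 / 2 * (\<epsilon> / b) * (n1 / s1)"
    unfolding b_def sR_def using G1 s1 by (simp add: field_simps)
  have c21: "12 * \<Gamma> * sqrt (R * s1 / n1) \<le> \<epsilon>" if "12 * \<Gamma> * sqrt (R * s2 / n2) \<le> \<epsilon>"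
  proof -
    have "real R * s1 / n1 \<le> real R * s2 / n2"
      using sn R1 by (metis mult_left_mono times_divide_eq_right of_nat_0_le_iff)
    then have "sqrt (R * s1 / n1) \<le> sqrt (R * s2 / n2)" by simp
    then show ?thesis using that G1 by (smt (verit) mult_left_mono)
  qed
  show ?thesis
  proof (cases "b \<le> \<epsilon>")
    case True
    have KB: "(KRG R \<Gamma> s1 s2 :: (real ^ 'n ^ 'm) set) \<subseteq> (\<Union>c\<in>{0}. cball c \<epsilon>)"
    proof
      fix Z assume "Z \<in> (KRG R \<Gamma> s1 s2 :: (real ^ 'n ^ 'm) set)"
      then obtain \<sigma> u v where Z: "Z = (\<Sum>r<R. \<sigma> r *\<^sub>R outer (u r) (v r))"
        and uv: "\<forall>r<R. u r \<in> Kns s1 \<and> v r \<in> Kns s2 \<and> norm (u r) = 1 \<and> norm (v r) = 1"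
        and sg: "sqrt (\<Sum>r<R. (\<sigma> r)\<^sup>2) \<le> \<Gamma>"
        unfolding KRG_def by blast
      have "norm Z \<le> (\<Sum>r<R. norm (\<sigma> r *\<^sub>R outer (u r) (v r)))" unfolding Z by (rule norm_sum)
      also have "\<dots> = (\<Sum>r<R. \<bar>\<sigma> r\<bar>)" using uv by (intro sum.cong refl) (simp add: norm_outer)
      also have "\<dots> \<le> sR * sqrt (\<Sum>r<R. (\<sigma> r)\<^sup>2)" unfolding sR_def by (rule sum_abs_le_sqrt)
      also have "\<dots> \<le> sR * \<Gamma>" using sg sR1 by (intro mult_left_mono) auto
      also have "\<dots> \<le> \<epsilon>" using True by (simp add: b_def mult.commute)
      finally show "Z \<in> (\<Union>c\<in>{0}. cball c \<epsilon>)" by simp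
    qed
    have "N \<le> card {0::real^'n^'m}" unfolding N_def by (rule covering_number_le) (use KB in auto)
    then have N1: "N \<le> 1" by simp
    have lnN: "ln (real N) \<le> 0"
    proof (cases "N = 0")
      case False
      then have "N = 1" using N1 by simp
      then show ?thesis by simp
    qed simp
    have L1: "0 \<le> ln (9 * \<epsilon> * n1 / (6 * \<Gamma> * sqrt R * s1))"
    proof -
      have "1 \<le> \<epsilon> / b" using True b1 by simp
      moreover have "1 \<le> n1 / s1" using s1 by simp
      ultimately have "1 \<le> (\<epsilon> / b) * (n1 / s1)" using mult_mono[of 1 "\<epsilon> / b" 1 "n1 / s1"] by simp
      then have "1 \<le> 3 / 2 * (\<epsilon> / b) * (n1 / s1)" by simp
      then show ?thesis unfolding L1eq by simp
    qed
    have p1: "0 \<le> 144 * \<Gamma>\<^sup>2 * real (R\<^sup>2) * s1 / \<epsilon>\<^sup>2" using s1 by simp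
    have p2: "0 \<le> 144 * \<Gamma>\<^sup>2 * real (R\<^sup>2) * (s1 + s2) / \<epsilon>\<^sup>2" using s1 s2 by simp
    have h1: "0 \<le> real R * (n1 + n2 + 1) * ln (36 * \<Gamma> * R / \<epsilon>)" using L36 n1p by simp
    have h2: "0 \<le> 144 * \<Gamma>\<^sup>2 * real (R\<^sup>2) * s1 / \<epsilon>\<^sup>2 * ln (9 * \<epsilon> * n1 / (6 * \<Gamma> * sqrt R * s1))
                         + R * (n2 + 1) * ln (36 * \<Gamma> * R / \<epsilon>)"
      using p1 L1 L36 n1p by (intro add_nonneg_nonneg mult_nonneg_nonneg) auto
    have h3: "0 \<le> 144 * \<Gamma>\<^sup>2 * real (R\<^sup>2) * (s1 + s2) / \<epsilon>\<^sup>2 * ln (9 * \<epsilon> * n1 / (6 * \<Gamma> * sqrt R * s1))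
                         + R * ln (18 * \<Gamma> * R / \<epsilon>)"
      using p2 L1 L18 by (intro add_nonneg_nonneg mult_nonneg_nonneg) auto
    show ?thesis
      apply (intro conjI impI)
      using h1 h2 h3 lnN by linarith+
  next
    case False
    then have eb': "\<epsilon> < b" by simp
    define a where "a = \<epsilon> / b"
    have a: "0 < a" "a < 1" "a \<le> 1" using e eb' b1 by (auto simp: a_def)
    define \<delta> where "\<delta> = a / 5"
    have d0: "0 < \<delta>" using a by (simp add: \<delta>_def)
    define h where "h = \<epsilon> / (3 * real R)"
    have h0: "0 < h" using e R1 by (simp add: h_def)
    have Rh: "real R * h = \<epsilon> / 3" using R1 by (simp add: h_def)
    obtain G where G: "finite G" "real (card G) \<le> (2 * \<Gamma> / h + 2) ^ R"
      "\<forall>\<sigma>. sqrt (\<Sum>r<R. (\<sigma> r)\<^sup>2) \<le> \<Gamma> \<longrightarrow> (\<exists>\<sigma>'\<in>G. (\<Sum>r<R. \<bar>\<sigma> r - \<sigma>' r\<bar>) \<le> real R * h \<and> (\<Sum>r<R. \<bar>\<sigma>' r\<bar>) \<le> (\<Sum>r<R. \<bar>\<sigma> r\<bar>) + real R * h)"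
      using sigma_grid[OF h0, of \<Gamma> R] G1 by auto
    have Gc: "\<forall>\<sigma>. sqrt (\<Sum>r<R. (\<sigma> r)\<^sup>2) \<le> \<Gamma> \<longrightarrow> (\<exists>\<sigma>'\<in>G. (\<Sum>r<R. \<bar>\<sigma> r - \<sigma>' r\<bar>) \<le> \<epsilon> / 3 \<and> (\<Sum>r<R. \<bar>\<sigma>' r\<bar>) \<le> b + \<epsilon> / 3)"
    proof (intro allI impI)
      fix \<sigma> :: "nat \<Rightarrow> real" assume sg: "sqrt (\<Sum>r<R. (\<sigma> r)\<^sup>2) \<le> \<Gamma>"
      have "(\<Sum>r<R. \<bar>\<sigma> r\<bar>) \<le> sR * sqrt (\<Sum>r<R. (\<sigma> r)\<^sup>2)" unfolding sR_def by (rule sum_abs_le_sqrt)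
      also have "\<dots> \<le> sR * \<Gamma>" using sg sR1 by (intro mult_left_mono) auto
      finally have "(\<Sum>r<R. \<bar>\<sigma> r\<bar>) \<le> b" by (simp add: b_def mult.commute)
      then show "\<exists>\<sigma>'\<in>G. (\<Sum>r<R. \<bar>\<sigma> r - \<sigma>' r\<bar>) \<le> \<epsilon> / 3 \<and> (\<Sum>r<R. \<bar>\<sigma>' r\<bar>) \<le> b + \<epsilon> / 3"
        using G(3) sg Rh by fastforce
    qed
    have G8: "1 \<le> 8 * \<Gamma> * R / \<epsilon>"
    proof -
      have "\<epsilon> \<le> 8 * (\<Gamma> * R)" using eb' bGR GR by linarith
      then show ?thesis using e by (simp add: mult.assoc)
    qed
    have cG: "real (card G) \<le> (8 * \<Gamma> * R / \<epsilon>) ^ R"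
    proof -
      have "2 * \<Gamma> / h + 2 = 6 * \<Gamma> * R / \<epsilon> + 2" using e R1 by (simp add: h_def field_simps)
      also have "\<dots> \<le> 8 * \<Gamma> * R / \<epsilon>"
      proof -
        have "\<epsilon> \<le> \<Gamma> * R" using eb' bGR by linarith
        then have "1 \<le> \<Gamma> * R / \<epsilon>" using e by simp
        moreover have "6 * \<Gamma> * R / \<epsilon> = 6 * (\<Gamma> * R / \<epsilon>)" "8 * \<Gamma> * R / \<epsilon> = 8 * (\<Gamma> * R / \<epsilon>)"
          by (simp_all add: mult.assoc)
        ultimately show ?thesis by linarith
      qed
      finally have "2 * \<Gamma> / h + 2 \<le> 8 * \<Gamma> * R / \<epsilon>" .
      then have "(2 * \<Gamma> / h + 2) ^ R \<le> (8 * \<Gamma> * R / \<epsilon>) ^ R"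
        using h0 G1 by (intro power_mono) auto
      then show ?thesis using G(2) by linarith
    qed
    have tot: "\<epsilon> / 3 + (b + \<epsilon> / 3) * (\<delta> + (1 + \<delta>) * \<delta>) \<le> \<epsilon>"
      using tot_arith[OF e(1) eb'] by (simp add: \<delta>_def a_def)
    have gen: "ln (real N) \<le> real R * ln (8 * \<Gamma> * R / \<epsilon>) + real R * ln U' + real R * ln V'"
      if U: "finite U" "\<forall>u. u \<in> Kns s1 \<and> norm u = 1 \<longrightarrow> (\<exists>u'\<in>U. norm (u - u') \<le> \<delta>)"
         "\<forall>u'\<in>U. norm u' \<le> 1 + \<delta>" "real (card U) \<le> U'" "1 \<le> U'"
      and V: "finite V" "\<forall>v. v \<in> Kns s2 \<and> norm v = 1 \<longrightarrow> (\<exists>v'\<in>V. norm (v - v') \<le> \<delta>)"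
         "real (card V) \<le> V'" "1 \<le> V'"
      for U :: "(real^'m) set" and V :: "(real^'n) set" and U' V'
    proof -
      have "real N \<le> real (card G) * real (card U) ^ R * real (card V) ^ R"
        unfolding N_def by (rule compose_cover[OF G(1) U(1) V(1) Gc U(2) U(3) V(2)]) (use d0 tot in auto)
      then have "ln (real N) \<le> ln ((8 * \<Gamma> * R / \<epsilon>) ^ R) + real R * ln U' + real R * ln V'"
        by (rule ln_final) (use cG U V G8 in auto)
      also have "ln ((8 * \<Gamma> * R / \<epsilon>) ^ R) = real R * ln (8 * \<Gamma> * R / \<epsilon>)"
        using G8 by (simp add: ln_realpow)
      finally show ?thesis .
    qed
    define L36 where "L36 = ln (36 * \<Gamma> * R / \<epsilon>)"
    define L18 where "L18 = ln (18 * \<Gamma> * R / \<epsilon>)"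
    define L8 where "L8 = ln (8 * \<Gamma> * R / \<epsilon>)"
    define L1 where "L1 = ln (9 * \<epsilon> * n1 / (6 * \<Gamma> * sqrt R * s1))"
    define Q where "Q = 15 * b / \<epsilon>"
    have Qa: "Q = 15 / a" using e b1 by (simp add: Q_def a_def)
    have Q1: "1 \<le> Q" using eb' e by (simp add: Q_def)
    have dQ: "(2 + \<delta>) / \<delta> \<le> Q"
    proof -
      have "(2 + \<delta>) / \<delta> = 10 / a + 1" using a by (simp add: \<delta>_def field_simps)
      moreover have "1 \<le> 5 / a" using a by simp
      moreover have "15 / a = 10 / a + 5 / a" by simp
      ultimately show ?thesis unfolding Qa by linarith
    qed
    have QL: "ln Q \<le> L36"
    proof -
      have "15 * b \<le> 36 * (\<Gamma> * R)" using bGR b1 by linarith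
      then have "15 * b \<le> 36 * \<Gamma> * R" by (simp add: mult.assoc)
      then have "Q \<le> 36 * \<Gamma> * R / \<epsilon>" unfolding Q_def using e by (simp add: divide_right_mono)
      then show ?thesis unfolding L36_def using Q1 by simp
    qed
    have L8a: "L8 \<le> L36" "L8 \<le> L18" unfolding L8_def L36_def L18_def using G8 e
      by (auto intro!: ln_mono divide_right_mono simp: mult_right_mono GR)
    obtain Uv :: "(real^'m) set" where Uv: "finite Uv" "\<forall>u. u \<in> Kns s1 \<and> norm u = 1 \<longrightarrow> (\<exists>u'\<in>Uv. norm (u - u') \<le> \<delta>)"
        "\<forall>u'\<in>Uv. norm u' \<le> 1 + \<delta>" "real (card Uv) \<le> ((2 + \<delta>) / \<delta>) ^ CARD('m)"
      using vol_U[OF d0, of s1] by blast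
    obtain Vv :: "(real^'n) set" where Vv: "finite Vv" "\<forall>u. u \<in> Kns s2 \<and> norm u = 1 \<longrightarrow> (\<exists>u'\<in>Vv. norm (u - u') \<le> \<delta>)"
        "\<forall>u'\<in>Vv. norm u' \<le> 1 + \<delta>" "real (card Vv) \<le> ((2 + \<delta>) / \<delta>) ^ CARD('n)"
      using vol_U[OF d0, of s2] by blast
    have cUv: "real (card Uv) \<le> Q ^ CARD('m)"
      using Uv(4) power_mono[OF dQ, of "CARD('m)"] d0 by (smt (verit) divide_nonneg_pos)
    have cVv: "real (card Vv) \<le> Q ^ CARD('n)"
      using Vv(4) power_mono[OF dQ, of "CARD('n)"] d0 by (smt (verit) divide_nonneg_pos)
    have Qp1: "1 \<le> Q ^ CARD('m)" "1 \<le> Q ^ CARD('n)" using Q1 by (auto intro: one_le_power)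
    have lnQm: "ln (Q ^ CARD('m)) = n1 * ln Q" and lnQn: "ln (Q ^ CARD('n)) = n2 * ln Q"
      using Q1 by (simp_all add: ln_realpow n1_def n2_def)
    have kk: "s / \<delta>\<^sup>2 = 25 * s / a\<^sup>2" for s using a by (simp add: \<delta>_def power_divide)
    define KU where "KU = (2 * CARD('m) + nat \<lceil>25 * s1 / a\<^sup>2\<rceil> - 1) choose nat \<lceil>25 * s1 / a\<^sup>2\<rceil>"
    define KV where "KV = (2 * CARD('n) + nat \<lceil>25 * s2 / a\<^sup>2\<rceil> - 1) choose nat \<lceil>25 * s2 / a\<^sup>2\<rceil>"
    obtain Us :: "(real^'m) set" where Us: "finite Us" "\<forall>u. u \<in> Kns s1 \<and> norm u = 1 \<longrightarrow> (\<exists>u'\<in>Us. norm (u - u') \<le> \<delta>)"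
        "\<forall>u'\<in>Us. norm u' \<le> 1 + \<delta>" "card Us \<le> KU"
      using sparse_U[OF s1(1) d0] unfolding KU_def kk by blast
    obtain Vs :: "(real^'n) set" where Vs: "finite Vs" "\<forall>u. u \<in> Kns s2 \<and> norm u = 1 \<longrightarrow> (\<exists>u'\<in>Vs. norm (u - u') \<le> \<delta>)"
        "\<forall>u'\<in>Vs. norm u' \<le> 1 + \<delta>" "card Vs \<le> KV"
      using sparse_U[OF s2(1) d0] unfolding KV_def kk by blast
    have KU1: "1 \<le> real KU"
    proof -
      have "0 < CARD('m)" by simp
      then have "0 < KU" unfolding KU_def by (intro zero_less_binomial) linarith
      then show ?thesis by simp
    qed
    have KV1: "1 \<le> real KV"
    proof -
      have "0 < CARD('n)" by simp
      then have "0 < KV" unfolding KV_def by (intro zero_less_binomial) linarith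
      then show ?thesis by simp
    qed
    have ab: "\<epsilon> / (\<Gamma> * sqrt (real R)) = a" by (simp add: a_def b_def sR_def)
    have L1eq': "L1 = ln (3 / 2 * a * (n1 / s1))" unfolding L1_def L1eq a_def by simp
    have a2: "a\<^sup>2 \<le> a" using a by (simp add: power2_eq_square mult_le_cancel_left1)
    have y1: "real CARD('m) * a\<^sup>2 / s1 \<ge> 144" and L1y1: "L1 \<ge> ln (real CARD('m) * a\<^sup>2 / s1)"
      if c1: "12 * \<Gamma> * sqrt (R * s1 / n1) \<le> \<epsilon>"
    proof -
      show "real CARD('m) * a\<^sup>2 / s1 \<ge> 144"
        using cond_y[of \<Gamma> "real R" s1 n1 \<epsilon>] c1 G1 R1 s1 n1p e unfolding ab n1_def by auto
      have "real CARD('m) * a\<^sup>2 / s1 = a\<^sup>2 * (n1 / s1)" by (simp add: n1_def)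
      also have "\<dots> \<le> 3 / 2 * a * (n1 / s1)"
        using a2 a s1 n1p by (intro mult_right_mono) auto
      finally have le: "real CARD('m) * a\<^sup>2 / s1 \<le> 3 / 2 * a * (n1 / s1)" .
      have "0 < real CARD('m) * a\<^sup>2 / s1" using a s1 by simp
      then show "L1 \<ge> ln (real CARD('m) * a\<^sup>2 / s1)" unfolding L1eq' using le by simp
    qed
    have y2: "real CARD('n) * a\<^sup>2 / s2 \<ge> 144" and L1y2: "L1 \<ge> ln (real CARD('n) * a\<^sup>2 / s2)"
      if c2: "12 * \<Gamma> * sqrt (R * s2 / n2) \<le> \<epsilon>"
    proof -
      show "real CARD('n) * a\<^sup>2 / s2 \<ge> 144"
        using cond_y[of \<Gamma> "real R" s2 n2 \<epsilon>] c2 G1 R1 s2 n1p e unfolding ab n2_def by auto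
      have ns: "n2 / s2 \<le> n1 / s1"
      proof -
        have "n2 / s2 = 1 / (s2 / n2)" "n1 / s1 = 1 / (s1 / n1)" by simp_all
        moreover have p: "0 < s1 / n1" "0 < s2 / n2" using s1 s2 n1p by simp_all
        moreover have "1 / (s2 / n2) \<le> 1 / (s1 / n1)"
          by (rule divide_left_mono[OF sn _ mult_pos_pos[OF p(2) p(1)]]) simp
        ultimately show ?thesis by simp
      qed
      have "real CARD('n) * a\<^sup>2 / s2 = a\<^sup>2 * (n2 / s2)" by (simp add: n2_def)
      also have "\<dots> \<le> a * (n1 / s1)"
        using a2 ns a s1 s2 n1p by (intro mult_mono) auto
      also have "\<dots> \<le> 3 / 2 * a * (n1 / s1)"
      proof -
        have "0 \<le> a * (n1 / s1)" using a s1 n1p by simp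
        then have "a * (n1 / s1) \<le> 3 / 2 * (a * (n1 / s1))" by linarith
        then show ?thesis by (simp only: mult.assoc)
      qed
      finally have le: "real CARD('n) * a\<^sup>2 / s2 \<le> 3 / 2 * a * (n1 / s1)" .
      have "0 < real CARD('n) * a\<^sup>2 / s2" using a s2 by simp
      then show "L1 \<ge> ln (real CARD('n) * a\<^sup>2 / s2)" unfolding L1eq' using le by simp
    qed
    have mU: "ln (real KU) \<le> 144 * (s1 / a\<^sup>2) * L1" if "12 * \<Gamma> * sqrt (R * s1 / n1) \<le> \<epsilon>"
      unfolding KU_def by (rule maurey_arith) (use a s1 y1[OF that] L1y1[OF that] in auto)
    have mV: "ln (real KV) \<le> 144 * (s2 / a\<^sup>2) * L1" if "12 * \<Gamma> * sqrt (R * s2 / n2) \<le> \<epsilon>"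
      unfolding KV_def by (rule maurey_arith) (use a s2 y2[OF that] L1y2[OF that] in auto)
    have Reqn: "real R * (144 * (s / a\<^sup>2) * L1) = 144 * \<Gamma>\<^sup>2 * real (R\<^sup>2) * s / \<epsilon>\<^sup>2 * L1" for s
    proof -
      have "a\<^sup>2 = \<epsilon>\<^sup>2 / (\<Gamma>\<^sup>2 * real R)"
        unfolding a_def b_def using sR2 by (simp add: power_divide power_mult_distrib power2_eq_square)
      then have sa: "s / a\<^sup>2 = s * \<Gamma>\<^sup>2 * real R / \<epsilon>\<^sup>2" by simp
      show ?thesis unfolding sa using e by (simp add: power2_eq_square field_simps)
    qed
    have R0: "0 \<le> real R" by simp
    have C1: "ln (real N) \<le> real R * (n1 + n2 + 1) * L36"
    proof -
      have "ln (real N) \<le> real R * L8 + real R * ln (Q ^ CARD('m)) + real R * ln (Q ^ CARD('n))"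
        unfolding L8_def by (rule gen[OF Uv(1-3) cUv Qp1(1) Vv(1,2) cVv Qp1(2)])
      also have "\<dots> = real R * (L8 + n1 * ln Q + n2 * ln Q)" unfolding lnQm lnQn by (simp add: algebra_simps)
      also have "\<dots> \<le> real R * (L36 + n1 * L36 + n2 * L36)"
        using L8a QL n1p by (intro mult_left_mono add_mono) auto
      also have "\<dots> = real R * (n1 + n2 + 1) * L36" by (simp add: algebra_simps)
      finally show ?thesis .
    qed
    have C2: "ln (real N) \<le> 144 * \<Gamma>\<^sup>2 * real (R\<^sup>2) * s1 / \<epsilon>\<^sup>2 * L1 + real R * (n2 + 1) * L36"
      if c1: "12 * \<Gamma> * sqrt (R * s1 / n1) \<le> \<epsilon>"
    proof -
      have cU: "real (card Us) \<le> real KU" using Us(4) by simp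
      have "ln (real N) \<le> real R * L8 + real R * ln (real KU) + real R * ln (Q ^ CARD('n))"
        unfolding L8_def by (rule gen[OF Us(1-3) cU KU1 Vv(1,2) cVv Qp1(2)])
      also have "\<dots> = real R * ln (real KU) + real R * (L8 + n2 * ln Q)" unfolding lnQn by (simp add: algebra_simps)
      also have "\<dots> \<le> real R * (144 * (s1 / a\<^sup>2) * L1) + real R * (L36 + n2 * L36)"
        using L8a QL n1p mU[OF c1] by (intro add_mono mult_left_mono) auto
      also have "\<dots> = 144 * \<Gamma>\<^sup>2 * real (R\<^sup>2) * s1 / \<epsilon>\<^sup>2 * L1 + real R * (n2 + 1) * L36"
        unfolding Reqn by (simp add: algebra_simps)
      finally show ?thesis .
    qed
    have C3: "ln (real N) \<le> 144 * \<Gamma>\<^sup>2 * real (R\<^sup>2) * (s1 + s2) / \<epsilon>\<^sup>2 * L1 + real R * L18"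
      if c2: "12 * \<Gamma> * sqrt (R * s2 / n2) \<le> \<epsilon>"
    proof -
      have c1: "12 * \<Gamma> * sqrt (R * s1 / n1) \<le> \<epsilon>" by (rule c21[OF c2])
      have cU: "real (card Us) \<le> real KU" using Us(4) by simp
      have cV: "real (card Vs) \<le> real KV" using Vs(4) by simp
      have "ln (real N) \<le> real R * L8 + real R * ln (real KU) + real R * ln (real KV)"
        unfolding L8_def by (rule gen[OF Us(1-3) cU KU1 Vs(1,2) cV KV1])
      also have "\<dots> \<le> real R * L18 + real R * (144 * (s1 / a\<^sup>2) * L1) + real R * (144 * (s2 / a\<^sup>2) * L1)"
        using L8a mU[OF c1] mV[OF c2] by (intro add_mono mult_left_mono) auto
      also have "\<dots> = 144 * \<Gamma>\<^sup>2 * real (R\<^sup>2) * s1 / \<epsilon>\<^sup>2 * L1 + 144 * \<Gamma>\<^sup>2 * real (R\<^sup>2) * s2 / \<epsilon>\<^sup>2 * L1 + real R * L18"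
        unfolding Reqn by (simp add: algebra_simps)
      also have "\<dots> = 144 * \<Gamma>\<^sup>2 * real (R\<^sup>2) * (s1 + s2) / \<epsilon>\<^sup>2 * L1 + real R * L18"
        by (simp add: algebra_simps add_divide_distrib)
      finally show ?thesis .
    qed
    show ?thesis using C1 C2 C3 unfolding L36_def L18_def L1_def by blast
  qed
qed

end
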